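(* Let $\mathcal{G}=(\mathcal{V},\mathcal{E})$ be a finite tree with at least one edge and let $i\in\mathcal{V}$ have degree $d_i$. Then the return time of the begrudgingly backtracking random walk at $i$ is $$\tilde{\mathtt{t}}(i;\mathcal{G})=\frac{2|\mathcal{E}|}{d_i}.$$
   Context: Begrudgingly backtracking random walk (BBRW) on $\mathcal{G}$: $x_1$ is uniform on the neighbors of $x_0$; for $n\ge0$, given $x_n=u,x_{n+1}=v$, $x_{n+2}$ is uniform on $\mathcal{N}(v)\setminus\{u\}$ if this set is nonempty, and $x_{n+2}=u$ otherwise. With $\overline{T}_i=\min\{n>0:x_n=i\}$, the return time is $\tilde{\mathtt{t}}(i;\mathcal{G})=\mathbb{E}[\overline{T}_i\mid x_0=i]$. *)

theory Defs
  imports "HOL-Analysis.Analysis" "HOL-Library.Extended_Nonnegative_Real"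
begin

definition simple_graph :: "'a set \<Rightarrow> 'a set set \<Rightarrow> bool" where
  "simple_graph V E \<longleftrightarrow> finite V \<and> (\<forall>e\<in>E. e \<subseteq> V \<and> card e = 2)"

definition nbrs :: "'a set set \<Rightarrow> 'a \<Rightarrow> 'a set" where
  "nbrs E v = {u. {u, v} \<in> E}"

definition degree :: "'a set set \<Rightarrow> 'a \<Rightarrow> nat" where
  "degree E v = card (nbrs E v)"

definition connected_graph :: "'a set \<Rightarrow> 'a set set \<Rightarrow> bool" where
  "connected_graph V E \<longleftrightarrow>
     (\<forall>u\<in>V. \<forall>v\<in>V. (u, v) \<in> {(x, y). {x, y} \<in> E}\<^sup>*)"

definition is_cycle :: "'a set set \<Rightarrow> 'a list \<Rightarrow> bool" where
  "is_cycle E cs \<longleftrightarrow> length cs \<ge> 3 \<and> distinct cs \<and>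
     (\<forall>k. Suc k < length cs \<longrightarrow> {cs ! k, cs ! Suc k} \<in> E) \<and>
     {last cs, hd cs} \<in> E"

definition tree :: "'a set \<Rightarrow> 'a set set \<Rightarrow> bool" where
  "tree V E \<longleftrightarrow> simple_graph V E \<and> connected_graph V E \<and> (\<nexists>cs. is_cycle E cs)"

(* probability of transition to w, given previous vertex u and current vertex v *)
definition bbrw_step :: "'a set set \<Rightarrow> 'a \<Rightarrow> 'a \<Rightarrow> 'a \<Rightarrow> real" where
  "bbrw_step E u v w =
     (if nbrs E v - {u} \<noteq> {}
      then (if w \<in> nbrs E v - {u} then 1 / real (card (nbrs E v - {u})) else 0)
      else (if w = u then 1 else 0))"

(* probability that the BBRW started at xs!0 follows the trajectory xs (length \<ge> 2) *)
definition bbrw_path_prob :: "'a set set \<Rightarrow> 'a list \<Rightarrow> real" where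
  "bbrw_path_prob E xs =
     (if xs ! 1 \<in> nbrs E (xs ! 0) then 1 / real (degree E (xs ! 0)) else 0) *
     (\<Prod>k\<in>{0..<length xs - 2}. bbrw_step E (xs ! k) (xs ! Suc k) (xs ! Suc (Suc k)))"

(* P(first return time to i equals n | x_0 = i), for n \<ge> 1 *)
definition first_return_prob :: "'a set \<Rightarrow> 'a set set \<Rightarrow> 'a \<Rightarrow> nat \<Rightarrow> real" where
  "first_return_prob V E i n =
     (if n = 0 then 0 else
      (\<Sum>xs\<in>{xs. length xs = Suc n \<and> set xs \<subseteq> V \<and> xs ! 0 = i \<and> xs ! n = i \<and>
                  (\<forall>k. 0 < k \<and> k < n \<longrightarrow> xs ! k \<noteq> i)}.
         bbrw_path_prob E xs))"

(* expected return time E[T_i | x_0 = i] in [0, \<infinity>]; the term \<top> * P(T = \<infinity>)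
   accounts for the event of never returning *)
definition return_time :: "'a set \<Rightarrow> 'a set set \<Rightarrow> 'a \<Rightarrow> ennreal" where
  "return_time V E i =
     (\<Sum>n. of_nat n * ennreal (first_return_prob V E i n))
     + top * (1 - (\<Sum>n. ennreal (first_return_prob V E i n)))"

end

theory Submission
  imports Defs
begin


locale bbt =
  fixes V :: "'a set" and E :: "'a set set" and i :: 'a
  assumes tr: "tree V E" and Ene: "E \<noteq> {}" and iV: "i \<in> V"
begin

lemma finV: "finite V" using tr by (simp add: tree_def simple_graph_def)

lemma edgeE: "e \<in> E \<Longrightarrow> e \<subseteq> V \<and> card e = 2"
  using tr by (simp add: tree_def simple_graph_def)

lemma edge_V: "{u,v} \<in> E \<Longrightarrow> u \<in> V \<and> v \<in> V"
  using edgeE by blast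

lemma edge_neq: "{u,v} \<in> E \<Longrightarrow> u \<noteq> v"
  using edgeE[of "{u,v}"] by auto

lemma edge_sym: "{u,v} \<in> E \<Longrightarrow> {v,u} \<in> E"
  by (simp add: insert_commute)

lemma nbrs_iff: "u \<in> nbrs E v \<longleftrightarrow> {u,v} \<in> E"
  by (simp add: nbrs_def)

lemma nbrs_sub: "nbrs E v \<subseteq> V"
  using edge_V by (auto simp: nbrs_def)

lemma fin_nbrs: "finite (nbrs E v)"
  using nbrs_sub finV finite_subset by blast

lemma step_nonneg: "bbrw_step E u v w \<ge> 0"
  by (simp add: bbrw_step_def)

lemma step_pos: "bbrw_step E u v w > 0 \<longleftrightarrow>
   (w \<in> nbrs E v - {u} \<or> (nbrs E v - {u} = {} \<and> w = u))"
proof -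
  have "finite (nbrs E v - {u})" using fin_nbrs by simp
  then show ?thesis
    by (auto simp: bbrw_step_def card_gt_0_iff)
qed

definition Pst :: "'a \<times> 'a \<Rightarrow> 'a \<times> 'a \<Rightarrow> bool" where
  "Pst s t \<longleftrightarrow> snd s = fst t \<and> {fst s, snd s} \<in> E \<and> bbrw_step E (fst s) (snd s) (snd t) > 0"

lemma Pst_edge: "Pst s t \<Longrightarrow> {fst t, snd t} \<in> E"
proof -
  assume a: "Pst s t"
  then have 1: "snd s = fst t" and 2: "{fst s, snd s} \<in> E"
    and 3: "snd t \<in> nbrs E (snd s) - {fst s} \<or> (nbrs E (snd s) - {fst s} = {} \<and> snd t = fst s)"
    unfolding Pst_def step_pos by auto
  from 3 show ?thesis
  proof
    assume "snd t \<in> nbrs E (snd s) - {fst s}"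
    then have "{snd t, snd s} \<in> E" by (simp add: nbrs_iff)
    then show ?thesis using 1 by (simp add: edge_sym)
  next
    assume "nbrs E (snd s) - {fst s} = {} \<and> snd t = fst s"
    then show ?thesis using 1 2 by (simp add: edge_sym)
  qed
qed

lemma Pst_rev: "Pst (u,v) (v',w) \<Longrightarrow> Pst (w,v) (v,u)"
proof -
  assume a: "Pst (u,v) (v',w)"
  then have v': "v' = v" and e1: "{u,v} \<in> E" and s: "bbrw_step E u v w > 0"
    by (auto simp: Pst_def)
  have e2: "{w,v} \<in> E" using Pst_edge[OF a] v' by (simp add: edge_sym)
  have "bbrw_step E w v u > 0"
  proof (cases "w = u")
    case True then show ?thesis using s by simp
  next
    case False
    then have "u \<in> nbrs E v - {w}" using e1 by (simp add: nbrs_iff)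
    then show ?thesis by (simp add: step_pos)
  qed
  then show ?thesis using e2 by (simp add: Pst_def)
qed

lemma Pst_star_edge: "Pst\<^sup>*\<^sup>* s t \<Longrightarrow> {fst s, snd s} \<in> E \<Longrightarrow> {fst t, snd t} \<in> E"
  by (induction rule: rtranclp_induct) (auto dest: Pst_edge)

lemma Pst_star_rev: "Pst\<^sup>*\<^sup>* s t \<Longrightarrow> Pst\<^sup>*\<^sup>* (snd t, fst t) (snd s, fst s)"
proof (induction rule: rtranclp_induct)
  case base then show ?case by simp
next
  case (step y z)
  have "Pst (fst y, snd y) (fst z, snd z)" using step(2) by simp
  from Pst_rev[OF this] have "Pst (snd z, fst z) (snd y, fst y)" using step(2) by (simp add: Pst_def)
  then show ?case using step(3) by (meson converse_rtranclp_into_rtranclp)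
qed

definition nbp :: "'a list \<Rightarrow> bool" where
  "nbp xs \<longleftrightarrow> (\<forall>k. Suc k < length xs \<longrightarrow> {xs!k, xs!Suc k} \<in> E) \<and>
               (\<forall>k. Suc (Suc k) < length xs \<longrightarrow> xs!Suc (Suc k) \<noteq> xs!k)"

lemma nbp_distinct:
  assumes "nbp xs" shows "distinct xs"
proof (rule ccontr)
  assume "\<not> distinct xs"
  then obtain a0 b0 where ab0: "a0 < length xs" "b0 < length xs" "a0 \<noteq> b0" "xs!a0 = xs!b0"
    by (auto simp: distinct_conv_nth)
  obtain a b where ab: "a < b" "b < length xs" "xs!a = xs!b"
  proof (cases "a0 < b0")
    case True then show ?thesis using that ab0 by blast
  next
    case False then have "b0 < a0" using ab0(3) by simp
    then show ?thesis using that[of b0 a0] ab0 by simp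
  qed
  define P where "P = (\<lambda>dd. \<exists>a. 0 < dd \<and> a + dd < length xs \<and> xs!a = xs!(a+dd))"
  have "P (b - a)" unfolding P_def using ab by (intro exI[of _ a]) auto
  define dd where "dd = (LEAST d. P d)"
  have Pd: "P dd" unfolding dd_def by (rule LeastI) fact
  have mind: "\<And>d'. d' < dd \<Longrightarrow> \<not> P d'" unfolding dd_def by (rule not_less_Least)
  from Pd obtain a where a: "0 < dd" "a + dd < length xs" "xs!a = xs!(a+dd)"
    unfolding P_def by blast
  define cs where "cs = take dd (drop a xs)"
  have lcs: "length cs = dd" using a by (simp add: cs_def)
  have csn: "\<And>k. k < dd \<Longrightarrow> cs!k = xs!(a+k)" using a by (simp add: cs_def)
  have adj: "\<And>k. Suc k < length xs \<Longrightarrow> {xs!k, xs!Suc k} \<in> E"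
    and nb: "\<And>k. Suc (Suc k) < length xs \<Longrightarrow> xs!Suc (Suc k) \<noteq> xs!k"
    using assms by (auto simp: nbp_def)
  have "dd \<noteq> 1"
  proof
    assume "dd = 1"
    then have "{xs!a, xs!Suc a} \<in> E" using adj[of a] a(2) by simp
    then show False using a(3) \<open>dd = 1\<close> edge_neq[of "xs!a" "xs!Suc a"] by simp
  qed
  moreover have "dd \<noteq> 2"
  proof
    assume "dd = 2"
    then show False using nb[of a] a by (simp add: numeral_2_eq_2)
  qed
  ultimately have d3: "dd \<ge> 3" using a by linarith
  have dist: "distinct cs"
    unfolding distinct_conv_nth
  proof (intro allI impI)
    fix p q assume pq: "p < length cs" "q < length cs" "p \<noteq> q"
    show "cs!p \<noteq> cs!q"
    proof
      assume eq: "cs!p = cs!q"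
      show False
      proof (cases "p < q")
        case True
        have "xs!(a+p) = xs!(a+p+(q-p))" using True pq eq lcs csn by simp
        then have "P (q - p)" unfolding P_def using True pq a(2) lcs
          by (intro exI[of _ "a+p"]) simp
        then show False using mind[of "q-p"] True pq lcs by auto
      next
        case False
        then have "q < p" using pq by simp
        have "xs!(a+q) = xs!(a+q+(p-q))" using \<open>q < p\<close> pq eq lcs csn by simp
        then have "P (p - q)" unfolding P_def using \<open>q < p\<close> pq a(2) lcs
          by (intro exI[of _ "a+q"]) simp
        then show False using mind[of "p-q"] \<open>q<p\<close> pq lcs by auto
      qed
    qed
  qed
  have "is_cycle E cs"
    unfolding is_cycle_def
  proof (intro conjI allI impI)
    show "3 \<le> length cs" using lcs d3 by simp
    show "distinct cs" by (rule dist)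
    fix k assume "Suc k < length cs"
    then show "{cs!k, cs!Suc k} \<in> E" using adj[of "a+k"] csn[of k] csn[of "Suc k"] lcs a(2) by simp
  next
    have ne: "cs \<noteq> []" using lcs a(1) by auto
    have "last cs = cs!(dd - 1)" using ne lcs by (simp add: last_conv_nth)
    also have "\<dots> = xs!(a + (dd - 1))" using csn[of "dd-1"] a(1) by simp
    finally have l: "last cs = xs!(a + (dd - 1))" .
    have "hd cs = cs!0" using ne by (simp add: hd_conv_nth)
    also have "\<dots> = xs!a" using csn[of 0] a(1) by simp
    finally have h: "hd cs = xs!(a+dd)" using a(3) by simp
    have "Suc (a + (dd - 1)) = a + dd" using a(1) by simp
    then have "{xs!(a + (dd - 1)), xs!(a+dd)} \<in> E" using adj[of "a + (dd-1)"] a(2) by simp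
    then show "{last cs, hd cs} \<in> E" using l h by simp
  qed
  then show False using tr by (auto simp: tree_def)
qed

lemma nbp_set: "nbp xs \<Longrightarrow> length xs \<ge> 2 \<Longrightarrow> set xs \<subseteq> V"
proof
  fix x assume a: "nbp xs" "length xs \<ge> 2" "x \<in> set xs"
  then obtain k where k: "k < length xs" "xs!k = x" by (auto simp: in_set_conv_nth)
  show "x \<in> V"
  proof (cases "Suc k < length xs")
    case True then show ?thesis using a k edge_V by (auto simp: nbp_def)
  next
    case False
    then have s: "Suc (k - 1) < length xs" "Suc (k-1) = k" using k a by auto
    have "{xs!(k-1), xs!Suc (k-1)} \<in> E" using a(1) s(1) unfolding nbp_def by blast
    then show ?thesis using k edge_V[of "xs!(k-1)" "xs!Suc (k-1)"] s(2) by auto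
  qed
qed

lemma nbp_len: "nbp xs \<Longrightarrow> length xs \<ge> 2 \<Longrightarrow> length xs \<le> card V"
  using nbp_distinct nbp_set finV by (metis card_mono distinct_card)

lemma nbp_Pst: "nbp xs \<Longrightarrow> Suc k < length xs \<Longrightarrow> Pst\<^sup>*\<^sup>* (xs!0, xs!1) (xs!k, xs!Suc k)"
proof (induction k)
  case 0 then show ?case by simp
next
  case (Suc k)
  have "Pst (xs!k, xs!Suc k) (xs!Suc k, xs!Suc (Suc k))"
  proof -
    have "{xs!k, xs!Suc k} \<in> E" "{xs!Suc k, xs!Suc (Suc k)} \<in> E" "xs!Suc (Suc k) \<noteq> xs!k"
      using Suc.prems by (auto simp: nbp_def)
    then show ?thesis unfolding Pst_def step_pos by (simp add: nbrs_iff insert_commute)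
  qed
  then show ?case using Suc by (meson Suc_lessD rtranclp.rtrancl_into_rtrancl)
qed

lemma to_leaf:
  assumes e: "{u,v} \<in> E"
  shows "\<exists>x l. Pst\<^sup>*\<^sup>* (u,v) (x,l) \<and> {x,l} \<in> E \<and> nbrs E l - {x} = {}"
proof -
  define P where "P = (\<lambda>n. \<exists>xs. nbp xs \<and> length xs = n \<and> n \<ge> 2 \<and> xs!0 = u \<and> xs!1 = v)"
  have "P 2" unfolding P_def using e
    by (intro exI[of _ "[u,v]"]) (auto simp: nbp_def less_Suc_eq)
  moreover have "\<forall>y. P y \<longrightarrow> y \<le> card V" unfolding P_def using nbp_len by blast
  ultimately obtain n where Pn: "P n" and mx: "\<And>y. P y \<Longrightarrow> y \<le> n"
    using Nat.ex_has_greatest_nat[of P 2 "card V"] by blast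
  then obtain xs where xs: "nbp xs" "length xs = n" "n \<ge> 2" "xs!0 = u" "xs!1 = v"
    unfolding P_def by blast
  define x where "x = xs!(n-2)"
  define l where "l = xs!(n-1)"
  have sn: "Suc (n-2) = n - 1" using xs by simp
  have p: "Pst\<^sup>*\<^sup>* (u,v) (x,l)" using nbp_Pst[OF xs(1), of "n-2"] xs sn
    by (simp add: x_def l_def)
  have el: "{x,l} \<in> E"
  proof -
    have "Suc (n-2) < length xs" using xs by simp
    then have "{xs!(n-2), xs!Suc (n-2)} \<in> E" using xs(1) unfolding nbp_def by blast
    then show ?thesis using sn by (simp add: x_def l_def)
  qed
  have "nbrs E l - {x} = {}"
  proof (rule ccontr)
    assume "nbrs E l - {x} \<noteq> {}"
    then obtain w where w: "w \<in> nbrs E l" "w \<noteq> x" by blast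
    have "nbp (xs @ [w])"
      unfolding nbp_def
    proof (intro conjI allI impI)
      fix k assume k: "Suc k < length (xs @ [w])"
      show "{(xs @ [w]) ! k, (xs @ [w]) ! Suc k} \<in> E"
      proof (cases "Suc k < length xs")
        case True then show ?thesis using xs(1) by (simp add: nth_append nbp_def)
      next
        case False
        then have "k = n - 1" "Suc k = n" using k xs by auto
        then show ?thesis using w xs by (simp add: nth_append l_def nbrs_iff edge_sym)
      qed
    next
      fix k assume k: "Suc (Suc k) < length (xs @ [w])"
      show "(xs @ [w]) ! Suc (Suc k) \<noteq> (xs @ [w]) ! k"
      proof (cases "Suc (Suc k) < length xs")
        case True then show ?thesis using xs(1) by (simp add: nth_append nbp_def)
      next
        case False
        then have "k = n - 2" "Suc (Suc k) = n" using k xs by auto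
        then show ?thesis using w xs by (simp add: nth_append x_def)
      qed
    qed
    then have "P (Suc n)" unfolding P_def using xs
      by (intro exI[of _ "xs @ [w]"]) (auto simp: nth_append)
    then show False using mx by fastforce
  qed
  then show ?thesis using p el by blast
qed

lemma bounce: "{u,v} \<in> E \<Longrightarrow> Pst\<^sup>*\<^sup>* (u,v) (v,u)"
proof -
  assume e: "{u,v} \<in> E"
  obtain x l where p: "Pst\<^sup>*\<^sup>* (u,v) (x,l)" and el: "{x,l} \<in> E" and lf: "nbrs E l - {x} = {}"
    using to_leaf[OF e] by blast
  have "Pst (x,l) (l,x)" using el lf by (simp add: Pst_def bbrw_step_def)
  moreover have "Pst\<^sup>*\<^sup>* (l,x) (v,u)" using Pst_star_rev[OF p] by simp
  ultimately show ?thesis using p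
    by (meson converse_rtranclp_into_rtranclp rtranclp_trans)
qed

lemma to_nbr: "{u,v} \<in> E \<Longrightarrow> w \<in> nbrs E v \<Longrightarrow> Pst\<^sup>*\<^sup>* (u,v) (v,w)"
proof -
  assume e: "{u,v} \<in> E" and w: "w \<in> nbrs E v"
  show ?thesis
  proof (cases "w = u")
    case True then show ?thesis using bounce[OF e] by simp
  next
    case False
    then have "Pst (u,v) (v,w)" using e w by (simp add: Pst_def step_pos)
    then show ?thesis by simp
  qed
qed

lemma to_vertex:
  assumes "(v,y) \<in> {(x, y). {x, y} \<in> E}\<^sup>*" and "{u,v} \<in> E"
  shows "\<exists>x. Pst\<^sup>*\<^sup>* (u,v) (x,y)"
  using assms(1)
proof (induction rule: rtrancl_induct)
  case base then show ?case by blast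
next
  case (step y z)
  then obtain x where p: "Pst\<^sup>*\<^sup>* (u,v) (x,y)" by blast
  have "{x,y} \<in> E" using Pst_star_edge[OF p] assms(2) by simp
  moreover have "z \<in> nbrs E y" using step(2) by (simp add: nbrs_iff edge_sym)
  ultimately have "Pst\<^sup>*\<^sup>* (x,y) (y,z)" by (rule to_nbr)
  then show ?case using p by (meson rtranclp_trans)
qed

definition Q' :: "'a \<times> 'a \<Rightarrow> 'a \<times> 'a \<Rightarrow> bool" where
  "Q' s t \<longleftrightarrow> Pst s t \<and> fst s \<noteq> i \<and> snd s \<noteq> i"

definition Fst :: "'a \<times> 'a \<Rightarrow> 'a \<times> 'a \<Rightarrow> bool" where
  "Fst s t \<longleftrightarrow> Pst s t \<and> snd t \<noteq> i"

lemma truncate: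
  "Pst\<^sup>*\<^sup>* s t \<Longrightarrow> snd t = i \<Longrightarrow> fst s \<noteq> i \<Longrightarrow> \<exists>t'. snd t' = i \<and> Q'\<^sup>*\<^sup>* s t'"
proof (induction rule: converse_rtranclp_induct)
  case base then show ?case by blast
next
  case (step s s1)
  show ?case
  proof (cases "snd s = i")
    case True then show ?thesis by blast
  next
    case False
    then have "fst s1 \<noteq> i" using step(1) by (simp add: Pst_def)
    then obtain t' where "snd t' = i" "Q'\<^sup>*\<^sup>* s1 t'" using step by blast
    moreover have "Q' s s1" using step(1) step(5) False by (simp add: Q'_def)
    ultimately have "Q'\<^sup>*\<^sup>* s t'" by (meson converse_rtranclp_into_rtranclp)
    then show ?thesis using \<open>snd t' = i\<close> by blast
  qed
qed

lemma Q'_rev: "Q'\<^sup>*\<^sup>* s t \<Longrightarrow> Fst\<^sup>*\<^sup>* (snd t, fst t) (snd s, fst s)"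
proof (induction rule: rtranclp_induct)
  case base then show ?case by simp
next
  case (step y z)
  have "Pst (fst y, snd y) (fst z, snd z)" using step(2) by (simp add: Q'_def)
  from Pst_rev[OF this] have "Pst (snd z, fst z) (snd y, fst y)" using step(2) by (simp add: Pst_def Q'_def)
  then have "Fst (snd z, fst z) (snd y, fst y)" using step(2) by (simp add: Fst_def Q'_def)
  then show ?case using step(3) by (meson converse_rtranclp_into_rtranclp)
qed

lemma Q'_Pst: "Q'\<^sup>*\<^sup>* s t \<Longrightarrow> Pst\<^sup>*\<^sup>* s t"
  by (induction rule: rtranclp_induct) (auto simp: Q'_def intro: rtranclp.rtrancl_into_rtrancl)

lemma reach:
  assumes e: "{v,w} \<in> E" and wi: "w \<noteq> i"
  shows "\<exists>x. x \<in> nbrs E i \<and> Fst\<^sup>*\<^sup>* (i,x) (v,w)"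
proof (cases "v = i")
  case True then show ?thesis using e by (intro exI[of _ w]) (auto simp: nbrs_iff insert_commute)
next
  case False
  have conn: "(v,i) \<in> {(x, y). {x, y} \<in> E}\<^sup>*"
    using tr edge_V[OF e] iV by (auto simp: tree_def connected_graph_def)
  obtain x where "Pst\<^sup>*\<^sup>* (w,v) (x,i)" using to_vertex[OF conn, of w] e by (auto simp: edge_sym)
  then obtain t' where t': "snd t' = i" "Q'\<^sup>*\<^sup>* (w,v) t'" using truncate wi by fastforce
  have "{fst t', snd t'} \<in> E" using Pst_star_edge[OF Q'_Pst[OF t'(2)]] e by (simp add: edge_sym)
  then have "fst t' \<in> nbrs E i" using t' by (simp add: nbrs_iff)
  moreover have "Fst\<^sup>*\<^sup>* (i, fst t') (v,w)" using Q'_rev[OF t'(2)] t' by simp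
  ultimately show ?thesis by blast
qed

end


context bbt
begin

abbreviation "dg \<equiv> real (degree E i)"

definition a1 :: "'a \<times> 'a \<Rightarrow> real" where
  "a1 t = (if fst t = i \<and> snd t \<in> nbrs E i then 1 / dg else 0)"

definition Op :: "('a \<times> 'a \<Rightarrow> real) \<Rightarrow> 'a \<times> 'a \<Rightarrow> real" where
  "Op \<mu> t = (if snd t \<noteq> i \<and> snd t \<in> V then (\<Sum>u\<in>V. \<mu> (u, fst t) * bbrw_step E u (fst t) (snd t)) else 0)"

definition evo :: "('a \<times> 'a \<Rightarrow> real) \<Rightarrow> nat \<Rightarrow> 'a \<times> 'a \<Rightarrow> real" where
  "evo \<mu> n = (Op ^^ n) \<mu>"

definition sv :: "nat \<Rightarrow> 'a \<times> 'a \<Rightarrow> real" where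
  "sv n = evo a1 n"

definition mass :: "('a \<times> 'a \<Rightarrow> real) \<Rightarrow> real" where
  "mass \<mu> = (\<Sum>u\<in>V. \<Sum>v\<in>V. \<mu> (u,v))"

definition cvec :: "'a \<times> 'a \<Rightarrow> real" where
  "cvec t = (if {fst t, snd t} \<in> E \<and> snd t \<noteq> i then 1 / dg else 0)"

lemma evo_0[simp]: "evo \<mu> 0 = \<mu>" by (simp add: evo_def)
lemma evo_Suc: "evo \<mu> (Suc n) = Op (evo \<mu> n)" by (simp add: evo_def)
lemma evo_add: "evo \<mu> (m + n) = evo (evo \<mu> m) n"
  unfolding evo_def by (metis funpow_add add.commute comp_apply)

lemma Op_lin_diff: "finite K \<Longrightarrow> Op (\<lambda>s. \<mu> s - (\<Sum>k\<in>K. f k s)) t = Op \<mu> t - (\<Sum>k\<in>K. Op (f k) t)"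
  by (simp add: Op_def sum_subtractf left_diff_distrib sum_distrib_right sum.swap[of _ K])

lemma Op_lin_sum: "finite K \<Longrightarrow> Op (\<lambda>s. (\<Sum>k\<in>K. c k * f k s)) t = (\<Sum>k\<in>K. c k * Op (f k) t)"
  by (simp add: Op_def sum_distrib_right sum_distrib_left sum.swap[of _ K] mult.assoc)

lemma evo_lin_sum: "finite K \<Longrightarrow> evo (\<lambda>s. (\<Sum>k\<in>K. c k * f k s)) n t = (\<Sum>k\<in>K. c k * evo (f k) n t)"
proof (induction n arbitrary: t)
  case 0 then show ?case by simp
next
  case (Suc n)
  have "evo (\<lambda>s. (\<Sum>k\<in>K. c k * f k s)) (Suc n) t = Op (\<lambda>s. (\<Sum>k\<in>K. c k * evo (f k) n s)) t"
  proof -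
    have "evo (\<lambda>s. (\<Sum>k\<in>K. c k * f k s)) n = (\<lambda>s. (\<Sum>k\<in>K. c k * evo (f k) n s))"
      using Suc by auto
    then show ?thesis by (simp add: evo_Suc)
  qed
  also have "\<dots> = (\<Sum>k\<in>K. c k * evo (f k) (Suc n) t)"
    using Suc.prems by (simp add: Op_lin_sum evo_Suc)
  finally show ?case .
qed

lemma Op_mono: "(\<And>s. \<mu> s \<le> \<nu> s) \<Longrightarrow> Op \<mu> t \<le> Op \<nu> t"
  unfolding Op_def by (auto intro!: sum_mono mult_right_mono step_nonneg)

lemma evo_mono: "(\<And>s. \<mu> s \<le> \<nu> s) \<Longrightarrow> evo \<mu> n t \<le> evo \<nu> n t"
proof (induction n arbitrary: t)
  case 0 then show ?case by simp
next
  case (Suc n) then show ?case by (simp add: evo_Suc Op_mono)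
qed

lemma Op_nonneg: "(\<And>s. 0 \<le> \<mu> s) \<Longrightarrow> 0 \<le> Op \<mu> t"
  unfolding Op_def by (auto intro!: sum_nonneg mult_nonneg_nonneg step_nonneg)

lemma evo_nonneg: "(\<And>s. 0 \<le> \<mu> s) \<Longrightarrow> 0 \<le> evo \<mu> n t"
proof (induction n arbitrary: t)
  case 0 then show ?case by simp
next
  case (Suc n) then show ?case by (simp add: evo_Suc Op_nonneg)
qed

lemma a1_nonneg: "0 \<le> a1 t" by (simp add: a1_def)
lemma sv_nonneg: "0 \<le> sv n t" unfolding sv_def by (rule evo_nonneg) (rule a1_nonneg)
lemma cvec_nonneg: "0 \<le> cvec t" by (simp add: cvec_def)

lemma row_sum: "{u,v} \<in> E \<Longrightarrow> (\<Sum>w\<in>V. bbrw_step E u v w) = 1"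
proof -
  assume e: "{u,v} \<in> E"
  have uV: "u \<in> V" using edge_V[OF e] by simp
  show ?thesis
  proof (cases "nbrs E v - {u} = {}")
    case True
    then have "(\<Sum>w\<in>V. bbrw_step E u v w) = (\<Sum>w\<in>V. if w = u then 1 else 0)"
      by (simp add: bbrw_step_def)
    also have "\<dots> = 1" using uV finV by simp
    finally show ?thesis .
  next
    case False
    let ?N = "nbrs E v - {u}"
    have sub: "?N \<subseteq> V" using nbrs_sub by blast
    have fin: "finite ?N" using fin_nbrs by simp
    have "(\<Sum>w\<in>V. bbrw_step E u v w) = (\<Sum>w\<in>V. if w \<in> ?N then 1 / real (card ?N) else 0)"
      using False by (simp add: bbrw_step_def)
    also have "\<dots> = (\<Sum>w\<in>?N. if w \<in> ?N then 1 / real (card ?N) else 0)"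
      by (rule sum.mono_neutral_right) (use sub finV in auto)
    also have "\<dots> = (\<Sum>w\<in>?N. 1 / real (card ?N))" by simp
    also have "\<dots> = 1" using False fin by simp
    finally show ?thesis .
  qed
qed

lemma col_sum: "w \<in> nbrs E v \<Longrightarrow> (\<Sum>u\<in>nbrs E v. bbrw_step E u v w) = 1"
proof -
  assume w: "w \<in> nbrs E v"
  let ?N = "nbrs E v"
  have fin: "finite ?N" by (rule fin_nbrs)
  show ?thesis
  proof (cases "card ?N = 1")
    case True
    then have N: "?N = {w}" using w by (metis card_1_singletonE singletonD)
    then show ?thesis by (simp add: bbrw_step_def)
  next
    case False
    then have c2: "card ?N \<ge> 2" using w fin by (metis One_nat_def card_0_eq empty_iff less_2_cases not_le)
    have cd: "\<And>u. u \<in> ?N \<Longrightarrow> card (?N - {u}) = card ?N - 1" using fin by simp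
    have ne: "\<And>u. u \<in> ?N \<Longrightarrow> ?N - {u} \<noteq> {}"
    proof
      fix u assume "u \<in> ?N" "?N - {u} = {}"
      then have "?N \<subseteq> {u}" by blast
      then have "card ?N \<le> 1" using card_mono[of "{u}" ?N] by simp
      then show False using c2 by simp
    qed
    have "(\<Sum>u\<in>?N. bbrw_step E u v w) = (\<Sum>u\<in>?N. if u \<noteq> w then 1 / real (card ?N - 1) else 0)"
      using w ne cd by (intro sum.cong) (auto simp: bbrw_step_def)
    also have "\<dots> = (\<Sum>u\<in>?N - {w}. if u \<noteq> w then 1 / real (card ?N - 1) else 0)"
      by (rule sum.mono_neutral_right) (use fin in auto)
    also have "\<dots> = (\<Sum>u\<in>?N - {w}. 1 / real (card ?N - 1))" by simp
    also have "\<dots> = 1" using cd[OF w] c2 fin by simp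
    finally show ?thesis .
  qed
qed

lemma cvec_fix: "cvec t = a1 t + Op cvec t"
proof -
  obtain v w where t: "t = (v,w)" by (cases t)
  show ?thesis
  proof (cases "w \<noteq> i \<and> w \<in> V")
    case False
    then have "cvec t = 0" "a1 t = 0" "Op cvec t = 0" using t edge_V[of v w] edge_neq[of i w]
      by (auto simp: cvec_def a1_def Op_def nbrs_iff insert_commute)
    then show ?thesis by simp
  next
    case True
    have Opc: "Op cvec t = (if v \<noteq> i then (\<Sum>u\<in>nbrs E v. bbrw_step E u v w) / dg else 0)"
    proof -
      have "Op cvec t = (\<Sum>u\<in>V. (if {u,v} \<in> E \<and> v \<noteq> i then 1 / dg else 0) * bbrw_step E u v w)"
        using True t by (simp add: Op_def cvec_def)
      also have "\<dots> = (\<Sum>u\<in>V. if u \<in> nbrs E v then (if v \<noteq> i then bbrw_step E u v w / dg else 0) else 0)"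
        by (intro sum.cong) (auto simp: nbrs_iff)
      also have "\<dots> = (\<Sum>u\<in>nbrs E v. if v \<noteq> i then bbrw_step E u v w / dg else 0)"
        using nbrs_sub finV by (simp add: sum.If_cases Int_absorb1)
      also have "\<dots> = (if v \<noteq> i then (\<Sum>u\<in>nbrs E v. bbrw_step E u v w) / dg else 0)"
        by (simp add: sum_divide_distrib)
      finally show ?thesis .
    qed
    show ?thesis
    proof (cases "{v,w} \<in> E")
      case True
      then have "w \<in> nbrs E v" by (simp add: nbrs_iff insert_commute)
      then have cs: "(\<Sum>u\<in>nbrs E v. bbrw_step E u v w) = 1" by (rule col_sum)
      show ?thesis using True \<open>w \<noteq> i \<and> w \<in> V\<close> t Opc cs
        by (auto simp: cvec_def a1_def nbrs_iff insert_commute)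
    next
      case False
      have "\<And>u. u \<in> nbrs E v \<Longrightarrow> bbrw_step E u v w = 0"
      proof -
        fix u assume u: "u \<in> nbrs E v"
        show "bbrw_step E u v w = 0"
        proof (rule ccontr)
          assume "bbrw_step E u v w \<noteq> 0"
          then have "bbrw_step E u v w > 0" using step_nonneg[of u v w] by simp
          then have "w \<in> nbrs E v \<or> w = u" by (auto simp: step_pos)
          then show False using u False by (auto simp: nbrs_iff insert_commute)
        qed
      qed
      then have "(\<Sum>u\<in>nbrs E v. bbrw_step E u v w) = 0" by simp
      then show ?thesis using False t Opc
        by (auto simp: cvec_def a1_def nbrs_iff insert_commute)
    qed
  qed
qed

lemma ident: "(\<Sum>k<N. sv k t) + evo cvec N t = cvec t"
proof (induction N arbitrary: t)
  case 0 then show ?case by simp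
next
  case (Suc N)
  have e: "evo cvec N = (\<lambda>s. cvec s - (\<Sum>k<N. sv k s))"
    using Suc by (auto simp: algebra_simps)
  have "evo cvec (Suc N) t = Op cvec t - (\<Sum>k<N. Op (sv k) t)"
    by (simp add: evo_Suc e Op_lin_diff)
  also have "\<dots> = cvec t - a1 t - (\<Sum>k<N. sv (Suc k) t)"
    using cvec_fix[of t] by (simp add: sv_def evo_Suc)
  finally have a: "evo cvec (Suc N) t = cvec t - a1 t - (\<Sum>k<N. sv (Suc k) t)" .
  have "(\<Sum>k<Suc N. sv k t) = sv 0 t + (\<Sum>k<N. sv (Suc k) t)"
    by (simp only: sum.lessThan_Suc_shift)
  then show ?case using a by (simp add: sv_def)
qed

end


context bbt
begin

lemma sv_support: "sv n t \<noteq> 0 \<Longrightarrow> {fst t, snd t} \<in> E \<and> snd t \<noteq> i"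
proof (induction n arbitrary: t)
  case 0
  then have "fst t = i" "snd t \<in> nbrs E i" by (auto simp: sv_def a1_def split: if_splits)
  then have "{fst t, snd t} \<in> E" by (simp add: nbrs_iff insert_commute)
  then show ?case using edge_neq[of "fst t" "snd t"] \<open>fst t = i\<close> by auto
next
  case (Suc n)
  then have ne: "Op (sv n) t \<noteq> 0" by (simp add: sv_def evo_Suc)
  then have si: "snd t \<noteq> i"  and "(\<Sum>u\<in>V. sv n (u, fst t) * bbrw_step E u (fst t) (snd t)) \<noteq> 0"
    by (auto simp: Op_def split: if_splits)
  then obtain u where u: "u \<in> V" "sv n (u, fst t) * bbrw_step E u (fst t) (snd t) \<noteq> 0"
    by (meson sum.not_neutral_contains_not_neutral)
  then have e: "{u, fst t} \<in> E" using Suc.IH[of "(u, fst t)"] by auto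
  have "bbrw_step E u (fst t) (snd t) > 0" using u(2) step_nonneg[of u "fst t" "snd t"] by auto
  then have "snd t \<in> nbrs E (fst t) - {u} \<or> snd t = u" by (auto simp: step_pos)
  then have "{fst t, snd t} \<in> E" using e by (auto simp: nbrs_iff insert_commute)
  then show ?case using si by simp
qed

definition pp :: "nat \<Rightarrow> real" where
  "pp n = (\<Sum>u\<in>V. \<Sum>v\<in>V. sv n (u,v) * bbrw_step E u v i)"

lemma mass_step: "mass (sv (Suc n)) = mass (sv n) - pp n"
proof -
  have key: "(\<Sum>w\<in>V. if w \<noteq> i then sv n (u,v) * bbrw_step E u v w else 0)
          = sv n (u,v) - sv n (u,v) * bbrw_step E u v i" for u v
  proof (cases "sv n (u,v) = 0")
    case True then show ?thesis by (auto intro!: sum.neutral)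
  next
    case False
    then have e: "{u,v} \<in> E" using sv_support[of n "(u,v)"] by simp
    have "(\<Sum>w\<in>V. if w \<noteq> i then sv n (u,v) * bbrw_step E u v w else 0)
        = sv n (u,v) * (\<Sum>w\<in>V. if w \<noteq> i then bbrw_step E u v w else 0)"
      by (auto simp: sum_distrib_left intro!: sum.cong)
    also have "(\<Sum>w\<in>V. if w \<noteq> i then bbrw_step E u v w else 0) = (\<Sum>w\<in>V - {i}. bbrw_step E u v w)"
      using finV iV by (simp add: sum.remove[of V i] )
    also have "\<dots> = 1 - bbrw_step E u v i"
      using finV iV row_sum[OF e] by (simp add: sum_diff1)
    finally show ?thesis by (simp add: algebra_simps)
  qed
  have "mass (sv (Suc n)) = (\<Sum>v\<in>V. \<Sum>w\<in>V. \<Sum>u\<in>V. if w \<noteq> i then sv n (u,v) * bbrw_step E u v w else 0)"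
    unfolding mass_def sv_def evo_Suc
    by (intro sum.cong refl) (simp add: Op_def)
  also have "\<dots> = (\<Sum>v\<in>V. \<Sum>u\<in>V. \<Sum>w\<in>V. if w \<noteq> i then sv n (u,v) * bbrw_step E u v w else 0)"
    by (intro sum.cong refl sum.swap)
  also have "\<dots> = (\<Sum>v\<in>V. \<Sum>u\<in>V. sv n (u,v) - sv n (u,v) * bbrw_step E u v i)"
    by (simp add: key)
  also have "\<dots> = (\<Sum>u\<in>V. \<Sum>v\<in>V. sv n (u,v) - sv n (u,v) * bbrw_step E u v i)"
    by (rule sum.swap)
  also have "\<dots> = mass (sv n) - pp n"
    by (simp add: mass_def pp_def sum_subtractf)
  finally show ?thesis .
qed

lemma deg_pos: "degree E i > 0"
proof -
  obtain e where e: "e \<in> E" using Ene by blast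
  then obtain a b where ab: "e = {a,b}" "a \<noteq> b" using edgeE[OF e] by (metis card_2_iff)
  then have aV: "a \<in> V" "b \<in> V" using edgeE[OF e] by auto
  have "\<exists>y. y \<in> nbrs E i"
  proof (cases "a = i")
    case True then show ?thesis using e ab by (auto simp: nbrs_iff insert_commute)
  next
    case False
    have "(i,a) \<in> {(x, y). {x, y} \<in> E}\<^sup>*" using tr aV iV by (auto simp: tree_def connected_graph_def)
    then obtain y where "(i,y) \<in> {(x, y). {x, y} \<in> E}" using False
      by (metis converse_rtranclE)
    then show ?thesis by (auto simp: nbrs_iff insert_commute)
  qed
  then show ?thesis using fin_nbrs by (auto simp: degree_def card_gt_0_iff)
qed

lemma mass_a1: "mass a1 = 1"
proof -
  have "mass a1 = (\<Sum>u\<in>V. if u = i then (\<Sum>v\<in>V. if v \<in> nbrs E i then 1 / dg else 0) else 0)"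
    unfolding mass_def by (intro sum.cong refl) (auto simp: a1_def)
  also have "\<dots> = (\<Sum>v\<in>V. if v \<in> nbrs E i then 1 / dg else 0)"
    using finV iV by simp
  also have "\<dots> = (\<Sum>v\<in>nbrs E i. if v \<in> nbrs E i then 1 / dg else 0)"
    by (rule sum.mono_neutral_right) (use finV nbrs_sub in auto)
  also have "\<dots> = 1" using deg_pos by (simp add: degree_def)
  finally show ?thesis .
qed

lemma mass_sum: "finite K \<Longrightarrow> mass (\<lambda>t. \<Sum>k\<in>K. c k * f k t) = (\<Sum>k\<in>K. c k * mass (f k))"
proof -
  have "mass (\<lambda>t. \<Sum>k\<in>K. c k * f k t) = (\<Sum>u\<in>V. \<Sum>k\<in>K. \<Sum>v\<in>V. c k * f k (u,v))"
    unfolding mass_def by (intro sum.cong refl sum.swap)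
  also have "\<dots> = (\<Sum>k\<in>K. \<Sum>u\<in>V. \<Sum>v\<in>V. c k * f k (u,v))" by (rule sum.swap)
  also have "\<dots> = (\<Sum>k\<in>K. c k * mass (f k))" by (simp add: mass_def sum_distrib_left)
  finally show ?thesis .
qed

lemma mass_mono: "(\<And>t. f t \<le> g t) \<Longrightarrow> mass f \<le> mass g"
  unfolding mass_def by (intro sum_mono) auto

lemma mass_nonneg: "(\<And>t. 0 \<le> f t) \<Longrightarrow> 0 \<le> mass f"
  unfolding mass_def by (intro sum_nonneg) auto

definition KK :: "('a \<times> 'a) set" where
  "KK = {t \<in> V \<times> V. {fst t, snd t} \<in> E \<and> snd t \<noteq> i}"

lemma finKK: "finite KK" unfolding KK_def using finV by simp

lemma card_dir: "card {t \<in> V \<times> V. {fst t, snd t} \<in> E} = 2 * card E"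
proof -
  let ?D = "{t \<in> V \<times> V. {fst t, snd t} \<in> E}"
  define Pe where "Pe e = {t. {fst t, snd t} = e}" for e :: "'a set"
  have D: "?D = (\<Union>e\<in>E. Pe e)" using edge_V by (auto simp: Pe_def)
  have finE: "finite E"
  proof -
    have "E \<subseteq> Pow V" using edgeE by blast
    then show ?thesis using finV by (meson finite_Pow_iff finite_subset)
  qed
  have c2: "card (Pe e) = 2" if e: "e \<in> E" for e
  proof -
    obtain a b where ab: "e = {a,b}" "a \<noteq> b" using edgeE[OF e] by (metis card_2_iff)
    have "Pe e = {(a,b),(b,a)}" using ab by (auto simp: Pe_def doubleton_eq_iff)
    then show ?thesis using ab by simp
  qed
  have "card (\<Union>e\<in>E. Pe e) = (\<Sum>e\<in>E. card (Pe e))"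
  proof (rule card_UN_disjoint[OF finE])
    show "\<forall>e\<in>E. finite (Pe e)"
    proof
      fix e assume "e \<in> E" then show "finite (Pe e)" using c2[of e] by (metis card.infinite zero_neq_numeral)
    qed
    show "\<forall>e\<in>E. \<forall>e'\<in>E. e \<noteq> e' \<longrightarrow> Pe e \<inter> Pe e' = {}" by (auto simp: Pe_def)
  qed
  then show ?thesis using D c2 by simp
qed

lemma card_KK: "card KK = 2 * card E - degree E i"
proof -
  let ?D = "{t \<in> V \<times> V. {fst t, snd t} \<in> E}"
  let ?Di = "{t \<in> ?D. snd t = i}"
  have "KK = ?D - ?Di" by (auto simp: KK_def)
  moreover have "?Di = (\<lambda>u. (u,i)) ` nbrs E i" using edge_V iV by (auto simp: nbrs_iff)
  then have "card ?Di = degree E i" by (simp add: card_image inj_on_def degree_def)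
  moreover have "card (?D - ?Di) = card ?D - card ?Di"
    by (rule card_Diff_subset) (use finV in auto)
  ultimately show ?thesis using card_dir by simp
qed

lemma mass_cvec: "mass cvec = real (card KK) / dg"
proof -
  have "mass cvec = (\<Sum>t\<in>V \<times> V. if t \<in> KK then 1 / dg else 0)"
    unfolding mass_def sum.cartesian_product by (intro sum.cong refl) (auto simp: cvec_def KK_def)
  also have "\<dots> = (\<Sum>t\<in>KK. 1 / dg)"
    using finV by (simp add: sum.If_cases KK_def Int_absorb1 Int_def)
  finally show ?thesis by simp
qed

lemma Fst_pos: "Fst\<^sup>*\<^sup>* (i,x) t \<Longrightarrow> x \<in> nbrs E i \<Longrightarrow> \<exists>n. sv n t > 0"
proof (induction rule: rtranclp_induct)
  case base
  have "sv 0 (i,x) > 0" using base deg_pos by (simp add: sv_def a1_def)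
  then show ?case by blast
next
  case (step y z)
  then obtain n where n: "sv n y > 0" by blast
  have F: "Pst y z" "snd z \<noteq> i" using step(2) by (auto simp: Fst_def)
  then have yz: "snd y = fst z" "{fst y, snd y} \<in> E" "bbrw_step E (fst y) (snd y) (snd z) > 0"
    by (auto simp: Pst_def)
  have zV: "snd z \<in> V" using Pst_edge[OF F(1)] edge_V by blast
  have yV: "fst y \<in> V" using yz edge_V by blast
  have yy: "(fst y, fst z) = y" using yz(1) by (simp add: prod_eq_iff)
  have "0 < sv n (fst y, fst z) * bbrw_step E (fst y) (fst z) (snd z)"
    using n yz yy by (metis mult_pos_pos)
  also have "\<dots> \<le> (\<Sum>u\<in>V. sv n (u, fst z) * bbrw_step E u (fst z) (snd z))"
    by (rule member_le_sum) (use yV finV sv_nonneg step_nonneg in \<open>auto intro: mult_nonneg_nonneg\<close>)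
  also have "\<dots> = sv (Suc n) z" using F zV by (simp add: sv_def evo_Suc Op_def)
  finally show ?case by blast
qed

lemma pos_KK: "t \<in> KK \<Longrightarrow> \<exists>n. sv n t > 0"
proof -
  assume "t \<in> KK"
  then have "{fst t, snd t} \<in> E" "snd t \<noteq> i" by (auto simp: KK_def)
  then obtain x where "x \<in> nbrs E i" "Fst\<^sup>*\<^sup>* (i,x) (fst t, snd t)" using reach by blast
  then show ?thesis using Fst_pos by fastforce
qed

end


context bbt
begin

definition mm :: "nat \<Rightarrow> real" where "mm n = mass (sv n)"

lemma mm_nonneg: "0 \<le> mm n" unfolding mm_def by (rule mass_nonneg) (rule sv_nonneg)

lemma mass_add: "mass (\<lambda>t. f t + g t) = mass f + mass g"
  by (simp add: mass_def sum.distrib)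

lemma mass_ident: "(\<Sum>k<N. mm k) + mass (evo cvec N) = mass cvec"
proof -
  have "mass cvec = mass (\<lambda>t. (\<Sum>k<N. 1 * sv k t) + evo cvec N t)"
    using ident[where N=N] by simp
  also have "\<dots> = (\<Sum>k<N. 1 * mass (sv k)) + mass (evo cvec N)"
    by (simp only: mass_add mass_sum[OF finite_lessThan])
  finally show ?thesis by (simp add: mm_def)
qed

lemma evo_c_nonneg: "0 \<le> mass (evo cvec N)"
  by (rule mass_nonneg) (rule evo_nonneg[OF cvec_nonneg])

lemma mm_summable: "summable mm"
proof (rule summableI_nonneg_bounded)
  show "0 \<le> mm n" for n by (rule mm_nonneg)
  show "sum mm {..<n} \<le> mass cvec" for n using mass_ident[of n] evo_c_nonneg[of n] by simp
qed

lemma mm_lim: "mm \<longlonglongrightarrow> 0" using mm_summable by (rule summable_LIMSEQ_zero)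

lemma evo_c_lim: "(\<lambda>N. mass (evo cvec N)) \<longlonglongrightarrow> 0"
proof -
  define nt where "nt t = (SOME n. sv n t > 0)" for t
  have ntp: "t \<in> KK \<Longrightarrow> sv (nt t) t > 0" for t
    unfolding nt_def using pos_KK by (rule someI_ex)
  define al where "al t = 1 / (dg * sv (nt t) t)" for t
  have dgp: "dg > 0" using deg_pos by simp
  have al_nn: "0 \<le> al t" for t using dgp sv_nonneg by (simp add: al_def)
  have bound: "cvec s \<le> (\<Sum>t\<in>KK. al t * sv (nt t) s)" for s
  proof (cases "s \<in> KK")
    case True
    have "cvec s = al s * sv (nt s) s" using True ntp[OF True] dgp
      by (simp add: cvec_def KK_def al_def)
    also have "\<dots> \<le> (\<Sum>t\<in>KK. al t * sv (nt t) s)"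
      by (rule member_le_sum) (use True finKK al_nn sv_nonneg in \<open>auto intro: mult_nonneg_nonneg\<close>)
    finally show ?thesis .
  next
    case False
    then have "cvec s = 0" using edge_V[of "fst s" "snd s"] by (cases s) (auto simp: cvec_def KK_def)
    then show ?thesis using al_nn sv_nonneg by (simp add: sum_nonneg)
  qed
  have evle: "evo cvec N s \<le> (\<Sum>t\<in>KK. al t * sv (nt t + N) s)" for N s
  proof -
    have "evo cvec N s \<le> evo (\<lambda>s. \<Sum>t\<in>KK. al t * sv (nt t) s) N s"
      by (rule evo_mono) (rule bound)
    also have "\<dots> = (\<Sum>t\<in>KK. al t * evo (sv (nt t)) N s)" by (rule evo_lin_sum[OF finKK])
    also have "\<dots> = (\<Sum>t\<in>KK. al t * sv (nt t + N) s)" by (simp add: sv_def evo_add)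
    finally show ?thesis .
  qed
  have mle: "mass (evo cvec N) \<le> (\<Sum>t\<in>KK. al t * mm (nt t + N))" for N
  proof -
    have "mass (evo cvec N) \<le> mass (\<lambda>s. \<Sum>t\<in>KK. al t * sv (nt t + N) s)"
      by (rule mass_mono) (rule evle)
    also have "\<dots> = (\<Sum>t\<in>KK. al t * mm (nt t + N))" by (simp add: mass_sum[OF finKK] mm_def)
    finally show ?thesis .
  qed
  have lim: "(\<lambda>N. \<Sum>t\<in>KK. al t * mm (nt t + N)) \<longlonglongrightarrow> 0"
  proof (rule tendsto_null_sum)
    fix t
    have "(\<lambda>N. mm (N + nt t)) \<longlonglongrightarrow> 0" by (rule LIMSEQ_ignore_initial_segment[OF mm_lim])
    then have "(\<lambda>N. mm (nt t + N)) \<longlonglongrightarrow> 0" by (simp add: add.commute)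
    then show "(\<lambda>N. al t * mm (nt t + N)) \<longlonglongrightarrow> 0" by (rule tendsto_mult_right_zero)
  qed
  show ?thesis
    by (rule real_tendsto_sandwich[where f="\<lambda>_. 0", OF _ _ _ lim])
       (use mle evo_c_nonneg in auto)
qed

lemma mm_sums: "mm sums mass cvec"
proof -
  have "(\<lambda>N. mass cvec - mass (evo cvec N)) \<longlonglongrightarrow> mass cvec - 0"
    by (intro tendsto_intros evo_c_lim)
  moreover have "(\<lambda>N. mass cvec - mass (evo cvec N)) = (\<lambda>N. \<Sum>k<N. mm k)"
    using mass_ident by (auto simp: algebra_simps)
  ultimately show ?thesis by (simp add: sums_def)
qed

lemma mm_0: "mm 0 = 1" by (simp add: mm_def sv_def mass_a1)

lemma mm_step: "pp n = mm n - mm (Suc n)" using mass_step[of n] by (simp add: mm_def)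

lemma pp_nonneg: "0 \<le> pp n"
  unfolding pp_def by (intro sum_nonneg mult_nonneg_nonneg sv_nonneg step_nonneg)

lemma deg_le: "degree E i \<le> 2 * card E"
proof -
  let ?D = "{t \<in> V \<times> V. {fst t, snd t} \<in> E}"
  let ?Di = "{t \<in> ?D. snd t = i}"
  have "?Di = (\<lambda>u. (u,i)) ` nbrs E i" using edge_V iV by (auto simp: nbrs_iff)
  then have "card ?Di = degree E i" by (simp add: card_image inj_on_def degree_def)
  moreover have "card ?Di \<le> card ?D" by (rule card_mono) (use finV in auto)
  ultimately show ?thesis using card_dir by simp
qed

lemma Lc_val: "1 + mass cvec = 2 * real (card E) / dg"
proof -
  have "real (card KK) = 2 * real (card E) - dg" using card_KK deg_le by (simp add: of_nat_diff)
  then show ?thesis using deg_pos by (simp add: mass_cvec field_simps)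
qed

end


lemma dec_summable_nm:
  fixes a :: "nat \<Rightarrow> real"
  assumes nn: "\<And>n. 0 \<le> a n" and dec: "\<And>n. a (Suc n) \<le> a n" and sm: "summable a"
  shows "(\<lambda>n. real (Suc n) * a n) \<longlonglongrightarrow> 0"
proof (rule LIMSEQ_I)
  fix r :: real assume r: "0 < r"
  have ds: "decseq a" using dec by (simp add: decseq_SucI)
  obtain M where M: "\<And>m n. m \<ge> M \<Longrightarrow> norm (sum a {m..<n}) < r / 2"
    using sm r unfolding summable_Cauchy by (metis half_gt_zero)
  have "norm (real (Suc n) * a n - 0) < r" if n: "n \<ge> 2 * M" for n
  proof -
    have low: "real (card {n div 2..<Suc n}) * a n \<le> sum a {n div 2..<Suc n}"
      by (rule sum_bounded_below) (use ds in \<open>auto simp: decseq_def\<close>)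
    have c: "real (card {n div 2..<Suc n}) \<ge> real (Suc n) / 2" by simp
    have "real (Suc n) / 2 * a n \<le> real (card {n div 2..<Suc n}) * a n"
      using mult_right_mono[OF c nn[of n]] by simp
    also have "\<dots> \<le> sum a {n div 2..<Suc n}" by (rule low)
    also have "\<dots> < r / 2" using M[of "n div 2" "Suc n"] n sum_nonneg[of "{n div 2..<Suc n}" a] nn by auto
    finally have "real (Suc n) / 2 * a n < r / 2" .
    then show ?thesis using nn[of n] by simp
  qed
  then show "\<exists>no. \<forall>n\<ge>no. norm (real (Suc n) * a n - 0) < r" by blast
qed


context bbt
begin

definition W :: "nat \<Rightarrow> 'a list set" where
  "W n = {xs. length xs = Suc (Suc n) \<and> set xs \<subseteq> V \<and> xs!0 = i \<and> (\<forall>k. 0 < k \<and> k < Suc (Suc n) \<longrightarrow> xs!k \<noteq> i)}"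

lemma fin_W: "finite (W n)"
proof -
  have "W n \<subseteq> {xs. set xs \<subseteq> V \<and> length xs = Suc (Suc n)}" by (auto simp: W_def)
  then show ?thesis using finite_lists_length_eq[OF finV] finite_subset by blast
qed

lemma path_app:
  assumes l: "length ys = Suc (Suc n)"
  shows "bbrw_path_prob E (ys @ [w]) = bbrw_path_prob E ys * bbrw_step E (ys!n) (ys!Suc n) w"
proof -
  define F where "F zs k = bbrw_step E (zs ! k) (zs ! Suc k) (zs ! Suc (Suc k))" for zs k
  have l2: "length (ys @ [w]) - 2 = Suc n" "length ys - 2 = n" using l by simp_all
  have h: "(ys @ [w]) ! 0 = ys ! 0" "(ys @ [w]) ! 1 = ys ! 1" using l by (simp_all add: nth_append)
  have "(\<Prod>k\<in>{0..<Suc n}. F (ys @ [w]) k) = (\<Prod>k\<in>{0..<n}. F (ys @ [w]) k) * F (ys @ [w]) n"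
    by (simp add: prod.atLeast0_lessThan_Suc)
  also have "(\<Prod>k\<in>{0..<n}. F (ys @ [w]) k) = (\<Prod>k\<in>{0..<n}. F ys k)"
    using l by (intro prod.cong refl) (simp add: F_def nth_append)
  also have "F (ys @ [w]) n = bbrw_step E (ys!n) (ys!Suc n) w"
    using l by (simp add: F_def nth_append)
  finally have p: "(\<Prod>k\<in>{0..<Suc n}. F (ys @ [w]) k) = (\<Prod>k\<in>{0..<n}. F ys k) * bbrw_step E (ys!n) (ys!Suc n) w" .
  show ?thesis unfolding bbrw_path_prob_def l2 h
    using p by (simp add: F_def mult.assoc)
qed

lemma len2: "length xs = 2 \<Longrightarrow> \<exists>a b. xs = [a,b]"
  by (auto simp: length_Suc_conv numeral_2_eq_2)

lemma W0: "W 0 = (\<lambda>v. [i,v]) ` (V - {i})"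
proof
  show "W 0 \<subseteq> (\<lambda>v. [i,v]) ` (V - {i})"
  proof
    fix xs assume xs: "xs \<in> W 0"
    then have "length xs = 2" by (simp add: W_def)
    then obtain a b where ab: "xs = [a,b]" using len2 by blast
    have "xs!1 \<noteq> i" using xs by (auto simp: W_def)
    then show "xs \<in> (\<lambda>v. [i,v]) ` (V - {i})" using xs ab by (auto simp: W_def)
  qed
  show "(\<lambda>v. [i,v]) ` (V - {i}) \<subseteq> W 0"
    using iV by (auto simp: W_def less_Suc_eq nth_Cons')
qed

lemma W_Suc: "W (Suc n) = (\<lambda>(ys,w). ys @ [w]) ` (W n \<times> (V - {i}))"
proof
  show "W (Suc n) \<subseteq> (\<lambda>(ys,w). ys @ [w]) ` (W n \<times> (V - {i}))"
  proof
    fix xs assume xs: "xs \<in> W (Suc n)"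
    then have l: "length xs = Suc (Suc (Suc n))" and sV: "set xs \<subseteq> V" and x0: "xs!0 = i"
      and ni: "\<And>k. 0 < k \<Longrightarrow> k < Suc (Suc (Suc n)) \<Longrightarrow> xs!k \<noteq> i"
      by (auto simp: W_def)
    have ne: "xs \<noteq> []" using l by auto
    have dec: "xs = butlast xs @ [last xs]" using ne by simp
    have lb: "length (butlast xs) = Suc (Suc n)" using l by simp
    have nb: "\<And>k. k < Suc (Suc n) \<Longrightarrow> butlast xs ! k = xs ! k" using lb by (simp add: nth_butlast)
    have "butlast xs \<in> W n"
      unfolding W_def using lb nb[of 0] x0 ni nb sV
      by (auto dest: in_set_butlastD)
    moreover have "last xs = xs ! Suc (Suc n)" using ne l by (simp add: last_conv_nth)
    then have "last xs \<in> V - {i}" using ni[of "Suc (Suc n)"] sV l ne by auto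
    ultimately show "xs \<in> (\<lambda>(ys,w). ys @ [w]) ` (W n \<times> (V - {i}))"
      using dec by (auto intro!: image_eqI[of _ _ "(butlast xs, last xs)"])
  qed
  show "(\<lambda>(ys,w). ys @ [w]) ` (W n \<times> (V - {i})) \<subseteq> W (Suc n)"
  proof
    fix xs assume "xs \<in> (\<lambda>(ys,w). ys @ [w]) ` (W n \<times> (V - {i}))"
    then obtain ys w where xs: "xs = ys @ [w]" and ys: "ys \<in> W n" and w: "w \<in> V" "w \<noteq> i" by auto
    have l: "length ys = Suc (Suc n)" using ys by (simp add: W_def)
    have "\<forall>k. 0 < k \<and> k < Suc (Suc (Suc n)) \<longrightarrow> xs!k \<noteq> i"
    proof (intro allI impI)
      fix k assume k: "0 < k \<and> k < Suc (Suc (Suc n))"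
      show "xs!k \<noteq> i"
      proof (cases "k < Suc (Suc n)")
        case True then show ?thesis using ys k l xs by (auto simp: W_def nth_append)
      next
        case False then have "k = Suc (Suc n)" using k by simp
        then show ?thesis using xs l w by (simp add: nth_append)
      qed
    qed
    then show "xs \<in> W (Suc n)" using ys w l xs by (auto simp: W_def nth_append)
  qed
qed

lemma W_sum: "(\<Sum>xs\<in>W n. bbrw_path_prob E xs * f (xs!n) (xs!Suc n)) = (\<Sum>u\<in>V. \<Sum>v\<in>V. sv n (u,v) * f u v)"
proof (induction n arbitrary: f)
  case 0
  have pp0: "bbrw_path_prob E [i,v] = (if v \<in> nbrs E i then 1 / dg else 0)" for v
    by (simp add: bbrw_path_prob_def)
  have "(\<Sum>xs\<in>W 0. bbrw_path_prob E xs * f (xs!0) (xs!Suc 0)) = (\<Sum>v\<in>V - {i}. bbrw_path_prob E [i,v] * f i v)"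
    unfolding W0 by (subst sum.reindex) (auto simp: inj_on_def)
  also have "\<dots> = (\<Sum>v\<in>V - {i}. if v \<in> nbrs E i then f i v / dg else 0)"
    by (intro sum.cong refl) (simp add: pp0)
  also have "\<dots> = (\<Sum>v\<in>V. if v \<in> nbrs E i then f i v / dg else 0)"
    by (rule sum.mono_neutral_left) (use finV edge_neq[of i i] in \<open>auto simp: nbrs_iff\<close>)
  also have "\<dots> = (\<Sum>u\<in>V. if u = i then (\<Sum>v\<in>V. if v \<in> nbrs E i then f i v / dg else 0) else 0)"
    using finV iV by simp
  also have "\<dots> = (\<Sum>u\<in>V. \<Sum>v\<in>V. sv 0 (u,v) * f u v)"
    by (intro sum.cong refl) (auto simp: sv_def a1_def intro!: sum.cong)
  finally show ?case by simp
next
  case (Suc n)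
  define g where "g u v = (\<Sum>w\<in>V - {i}. bbrw_step E u v w * f v w)" for u v
  have inj: "inj_on (\<lambda>(ys,w). ys @ [w]) (W n \<times> (V - {i}))" by (auto simp: inj_on_def)
  have lW: "\<And>ys. ys \<in> W n \<Longrightarrow> length ys = Suc (Suc n)" by (simp add: W_def)
  have "(\<Sum>xs\<in>W (Suc n). bbrw_path_prob E xs * f (xs!Suc n) (xs!Suc (Suc n)))
      = (\<Sum>(ys,w)\<in>W n \<times> (V - {i}). bbrw_path_prob E (ys @ [w]) * f ((ys @ [w])!Suc n) ((ys @ [w])!Suc (Suc n)))"
    unfolding W_Suc by (subst sum.reindex[OF inj]) (simp add: case_prod_unfold)
  also have "\<dots> = (\<Sum>ys\<in>W n. \<Sum>w\<in>V - {i}. bbrw_path_prob E (ys @ [w]) * f ((ys @ [w])!Suc n) ((ys @ [w])!Suc (Suc n)))"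
    by (rule sum.cartesian_product[symmetric])
  also have "\<dots> = (\<Sum>ys\<in>W n. bbrw_path_prob E ys * g (ys!n) (ys!Suc n))"
  proof (intro sum.cong refl)
    fix ys assume ys: "ys \<in> W n"
    have l: "length ys = Suc (Suc n)" using lW[OF ys] .
    show "(\<Sum>w\<in>V - {i}. bbrw_path_prob E (ys @ [w]) * f ((ys @ [w])!Suc n) ((ys @ [w])!Suc (Suc n)))
        = bbrw_path_prob E ys * g (ys!n) (ys!Suc n)"
      using l by (simp add: path_app g_def nth_append sum_distrib_left mult.assoc)
  qed
  also have "\<dots> = (\<Sum>u\<in>V. \<Sum>v\<in>V. sv n (u,v) * g u v)" by (rule Suc.IH)
  also have "\<dots> = (\<Sum>u\<in>V. \<Sum>v\<in>V. \<Sum>w\<in>V - {i}. sv n (u,v) * bbrw_step E u v w * f v w)"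
    by (simp add: g_def sum_distrib_left mult.assoc)
  also have "\<dots> = (\<Sum>v\<in>V. \<Sum>u\<in>V. \<Sum>w\<in>V - {i}. sv n (u,v) * bbrw_step E u v w * f v w)"
    by (rule sum.swap)
  also have "\<dots> = (\<Sum>v\<in>V. \<Sum>w\<in>V - {i}. \<Sum>u\<in>V. sv n (u,v) * bbrw_step E u v w * f v w)"
    by (intro sum.cong refl sum.swap)
  also have "\<dots> = (\<Sum>v\<in>V. \<Sum>w\<in>V. sv (Suc n) (v,w) * f v w)"
  proof (rule sum.cong[OF refl])
    fix v assume v: "v \<in> V"
    have "(\<Sum>w\<in>V. sv (Suc n) (v,w) * f v w) = (\<Sum>w\<in>V - {i}. sv (Suc n) (v,w) * f v w)"
      by (rule sum.mono_neutral_right) (use finV in \<open>auto simp: sv_def evo_Suc Op_def\<close>)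
    also have "\<dots> = (\<Sum>w\<in>V - {i}. \<Sum>u\<in>V. sv n (u,v) * bbrw_step E u v w * f v w)"
      by (intro sum.cong refl) (auto simp: sv_def evo_Suc Op_def sum_distrib_right)
    finally show "(\<Sum>w\<in>V - {i}. \<Sum>u\<in>V. sv n (u,v) * bbrw_step E u v w * f v w) = (\<Sum>w\<in>V. sv (Suc n) (v,w) * f v w)"
      by simp
  qed
  finally show ?case .
qed

lemma frp_SS: "first_return_prob V E i (Suc (Suc n)) = pp n"
proof -
  let ?R = "{xs. length xs = Suc (Suc (Suc n)) \<and> set xs \<subseteq> V \<and> xs ! 0 = i \<and> xs ! Suc (Suc n) = i \<and>
                  (\<forall>k. 0 < k \<and> k < Suc (Suc n) \<longrightarrow> xs ! k \<noteq> i)}"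
  have R: "?R = (\<lambda>ys. ys @ [i]) ` W n"
  proof
    show "?R \<subseteq> (\<lambda>ys. ys @ [i]) ` W n"
    proof
      fix xs assume xs: "xs \<in> ?R"
      then have l: "length xs = Suc (Suc (Suc n))" by simp
      have ne: "xs \<noteq> []" using l by auto
      have dec: "xs = butlast xs @ [last xs]" using ne by simp
      have lb: "length (butlast xs) = Suc (Suc n)" using l by simp
      have nb: "\<And>k. k < Suc (Suc n) \<Longrightarrow> butlast xs ! k = xs ! k" using lb by (simp add: nth_butlast)
      have "butlast xs \<in> W n"
        unfolding W_def using lb nb[of 0] xs nb
        by (auto dest: in_set_butlastD)
      moreover have "last xs = i" using ne l xs by (simp add: last_conv_nth)
      ultimately show "xs \<in> (\<lambda>ys. ys @ [i]) ` W n" using dec by (metis image_eqI)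
    qed
    show "(\<lambda>ys. ys @ [i]) ` W n \<subseteq> ?R"
    proof
      fix xs assume "xs \<in> (\<lambda>ys. ys @ [i]) ` W n"
      then obtain ys where xs: "xs = ys @ [i]" and ys: "ys \<in> W n" by auto
      have l: "length ys = Suc (Suc n)" using ys by (simp add: W_def)
      show "xs \<in> ?R" using ys l xs iV by (auto simp: W_def nth_append)
    qed
  qed
  have "first_return_prob V E i (Suc (Suc n)) = (\<Sum>xs\<in>?R. bbrw_path_prob E xs)"
    by (simp add: first_return_prob_def)
  also have "\<dots> = (\<Sum>ys\<in>W n. bbrw_path_prob E (ys @ [i]))"
    unfolding R by (subst sum.reindex) (auto simp: inj_on_def)
  also have "\<dots> = (\<Sum>ys\<in>W n. bbrw_path_prob E ys * bbrw_step E (ys!n) (ys!Suc n) i)"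
    by (intro sum.cong refl) (simp add: path_app W_def)
  also have "\<dots> = pp n" unfolding pp_def by (rule W_sum)
  finally show ?thesis .
qed

lemma frp_1: "first_return_prob V E i 1 = 0"
proof -
  have ni: "i \<notin> nbrs E i" using edge_neq[of i i] by (auto simp: nbrs_iff)
  have z: "bbrw_path_prob E xs = 0" if "xs ! 0 = i" "xs ! 1 = i" for xs
    using that ni by (simp add: bbrw_path_prob_def)
  let ?R = "{xs. length xs = Suc 1 \<and> set xs \<subseteq> V \<and> xs ! 0 = i \<and> xs ! 1 = i \<and>
                  (\<forall>k. 0 < k \<and> k < 1 \<longrightarrow> xs ! k \<noteq> i)}"
  have "first_return_prob V E i 1 = (\<Sum>xs\<in>?R. bbrw_path_prob E xs)"
    unfolding first_return_prob_def by simp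
  also have "\<dots> = 0"
  proof (rule sum.neutral, rule ballI)
    fix xs assume "xs \<in> ?R"
    then have "xs ! 0 = i" "xs ! 1 = i" by blast+
    then show "bbrw_path_prob E xs = 0" by (rule z)
  qed
  finally show ?thesis .
qed

lemma final: "return_time V E i = ennreal (2 * real (card E) / dg)"
proof -
  define p where "p n = first_return_prob V E i n" for n
  have p0: "p 0 = 0" by (simp add: p_def first_return_prob_def)
  have p1: "p 1 = 0" unfolding p_def by (rule frp_1)
  then have p1': "p (Suc 0) = 0" by simp
  have pSS: "p (Suc (Suc n)) = mm n - mm (Suc n)" for n by (simp add: p_def frp_SS mm_step)
  have p_nn: "0 \<le> p n" for n
  proof (cases n)
    case 0 then show ?thesis by (simp add: p0)
  next
    case (Suc k) then show ?thesis
      by (cases k) (auto simp: p1' pSS mm_step[symmetric] pp_nonneg)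
  qed
  have "(\<lambda>n. mm n - mm (Suc n)) sums (mm 0 - 0)" by (rule telescope_sums'[OF mm_lim])
  then have "(\<lambda>n. p (Suc (Suc n))) sums 1" by (simp add: pSS mm_0)
  then have "(\<lambda>n. p (Suc n)) sums 1" using sums_Suc_iff[of "\<lambda>n. p (Suc n)"] p1 by simp
  then have psum: "p sums 1" using sums_Suc_iff[of p] p0 by simp
  have dec: "mm (Suc n) \<le> mm n" for n using pp_nonneg[of n] mm_step[of n] by simp
  have nm: "(\<lambda>n. real (Suc n) * mm n) \<longlonglongrightarrow> 0"
    by (rule dec_summable_nm[OF mm_nonneg dec mm_summable])
  have ps: "(\<lambda>N. \<Sum>k<N. mm k) \<longlonglongrightarrow> mass cvec" using mm_sums by (simp add: sums_def)
  have part: "(\<Sum>k<N. real (Suc (Suc k)) * p (Suc (Suc k))) = 1 + (\<Sum>k<N. mm k) - real (Suc N) * mm N" for N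
  proof (induction N)
    case 0 then show ?case by (simp add: mm_0)
  next
    case (Suc N) then show ?case by (simp add: pSS algebra_simps)
  qed
  have "(\<lambda>N. 1 + (\<Sum>k<N. mm k) - real (Suc N) * mm N) \<longlonglongrightarrow> 1 + mass cvec - 0"
    by (intro tendsto_intros ps nm)
  then have "(\<lambda>N. 1 + (\<Sum>k<N. mm k) - real (Suc N) * mm N) \<longlonglongrightarrow> 1 + mass cvec"
    by (simp only: diff_zero)
  then have "(\<lambda>k. real (Suc (Suc k)) * p (Suc (Suc k))) sums (1 + mass cvec)"
    unfolding sums_def part .
  then have "(\<lambda>k. real (Suc k) * p (Suc k)) sums (1 + mass cvec)"
    using sums_Suc_iff[of "\<lambda>k. real (Suc k) * p (Suc k)"] p1 by simp
  then have nsum: "(\<lambda>k. real k * p k) sums (1 + mass cvec)"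
    using sums_Suc_iff[of "\<lambda>k. real k * p k"] by simp
  have s1: "(\<Sum>n. ennreal (p n)) = 1"
    using suminf_ennreal2[OF p_nn sums_summable[OF psum]] sums_unique[OF psum] by simp
  have "(\<Sum>n. of_nat n * ennreal (p n)) = (\<Sum>n. ennreal (real n * p n))"
    by (simp add: ennreal_mult p_nn ennreal_of_nat_eq_real_of_nat)
  also have "\<dots> = ennreal (\<Sum>n. real n * p n)"
    by (rule suminf_ennreal2) (use p_nn sums_summable[OF nsum] in auto)
  also have "\<dots> = ennreal (1 + mass cvec)" using sums_unique[OF nsum] by simp
  finally have s2: "(\<Sum>n. of_nat n * ennreal (p n)) = ennreal (2 * real (card E) / dg)"
    using Lc_val by simp
  show ?thesis unfolding return_time_def using s1 s2 by (simp add: p_def)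
qed

end

theorem lemma6:
  fixes V :: "'a set" and E :: "'a set set" and i :: 'a
  assumes "tree V E" and "E \<noteq> {}" and "i \<in> V"
  shows "return_time V E i = ennreal (2 * real (card E) / real (degree E i))"
proof -
  interpret bbt V E i using assms by unfold_locales
  show ?thesis by (rule final)
qed

end
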